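(* Let $S$ be a pool of size $m$ in $[0,1]$, and assume that $\mathrm{err}(S,\mathcal{H}_{\dashv}) \leq k/m$. Then the following procedure finds $\hat{h}$ such that $\mathrm{err}(S,\hat{h}) = \mathrm{err}(S,\mathcal{H}_{\dashv})$ with an auditing complexity of $k+1$: query the labels of the points of $S$ in order from highest to lowest value, stopping once $k+1$ negative labels have been observed, and return a threshold hypothesis in $\mathcal{H}_{\dashv}$ that minimizes the error on the labeled (queried) points.
   Context: The domain is $\mathcal{X}=[0,1]$ with labels in $\{-1,+1\}$. $\mathcal{H}_{\dashv} = \{h_a \mid a \in [0,1]\}$ is the class of thresholds on the line, where the hypothesis with threshold $a$ labels $x$ positive if $x \geq a$ and negative otherwise. For a multiset $S$ of labeled points, $\mathrm{err}(S,h)$ is the fraction of points in $S$ misclassified by $h$, and $\mathrm{err}(S,\mathcal{H}) = \min_{h\in\mathcal{H}}\mathrm{err}(S,h)$. The pool $S$ is given with hidden labels that are revealed only upon querying. The auditing complexity of a procedure is the number of queries it makes on points whose labels are negative (queries returning positive labels are free). *)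

theory Defs
  imports Main "HOL-Library.Multiset" Complex_Main
begin

text \<open>Labeled points: pairs (x, y) with x a real in [0,1] and y in {-1, +1} (as an int).
  A pool is a list (representing a multiset) of labeled points.\<close>

type_synonym lpoint = "real \<times> int"

definition thr :: "real \<Rightarrow> real \<Rightarrow> int" where
  "thr a x = (if x \<ge> a then 1 else -1)"

definition err :: "lpoint list \<Rightarrow> real \<Rightarrow> real" where
  "err S a = real (length (filter (\<lambda>(x, y). thr a x \<noteq> y) S)) / real (length S)"

definition err_H :: "lpoint list \<Rightarrow> real" where
  "err_H S = (INF a \<in> {0..1}. err S a)"

text \<open>Points queried when scanning the list in order and stopping right after
  the (n+1)-th negative label has been observed (or when the list is exhausted).\<close>
fun query_prefix :: "nat \<Rightarrow> lpoint list \<Rightarrow> lpoint list" where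
  "query_prefix n [] = []"
| "query_prefix n (p # ps) =
     (if snd p = -1 then (if n = 0 then [p] else p # query_prefix (n - 1) ps)
      else p # query_prefix n ps)"

definition audit_cost :: "lpoint list \<Rightarrow> nat" where
  "audit_cost Q = length (filter (\<lambda>p. snd p = -1) Q)"

end

theory Submission
  imports Defs
begin

definition cnt :: "lpoint list \<Rightarrow> real \<Rightarrow> nat" where
  "cnt L a = length (filter (\<lambda>(x, y). thr a x \<noteq> y) L)"

lemma err_cnt: "err L a = real (cnt L a) / real (length L)"
  by (simp add: err_def cnt_def)

lemma min_exists: "\<exists>a0\<in>{0..1::real}. \<forall>a\<in>{0..1}. cnt L a0 \<le> cnt L a"
proof -
  have "(0::real) \<in> {0..1}" by simp
  from ex_has_least_nat[of "\<lambda>a. a \<in> {0..1::real}", OF this, of "cnt L"]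
  show ?thesis by blast
qed

lemma errH_eq:
  assumes a0: "a0 \<in> {0..1}" and mn: "\<forall>a\<in>{0..1}. cnt L a0 \<le> cnt L a"
  shows "err_H L = err L a0"
proof -
  have le: "err L a0 \<le> err L a" if "a \<in> {0..1}" for a
    using mn that by (simp add: err_cnt divide_right_mono)
  have bdd: "bdd_below (err L ` {0..1})" using le by (intro bdd_belowI[where m="err L a0"]) auto
  have "err_H L \<le> err L a0" unfolding err_H_def using bdd a0 by (rule cINF_lower)
  moreover have "err L a0 \<le> err_H L" unfolding err_H_def
    by (rule cINF_greatest) (use le in auto)
  ultimately show ?thesis by simp
qed

lemma opt_iff:
  assumes ne: "L \<noteq> []" and a: "a \<in> {0..1}"
  shows "err L a = err_H L \<longleftrightarrow> (\<forall>a'\<in>{0..1}. cnt L a \<le> cnt L a')"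
proof -
  obtain a0 where a0: "a0 \<in> {0..1}" "\<forall>a\<in>{0..1}. cnt L a0 \<le> cnt L a"
    using min_exists by blast
  have H: "err_H L = err L a0" using errH_eq a0 by blast
  have pos: "real (length L) > 0" using ne by simp
  show ?thesis
  proof
    assume e: "err L a = err_H L"
    hence "cnt L a = cnt L a0" using H pos by (simp add: err_cnt)
    thus "\<forall>a'\<in>{0..1}. cnt L a \<le> cnt L a'" using a0 by simp
  next
    assume "\<forall>a'\<in>{0..1}. cnt L a \<le> cnt L a'"
    hence "cnt L a = cnt L a0" using a0 a by (metis le_antisym)
    thus "err L a = err_H L" using H by (simp add: err_cnt)
  qed
qed

lemma qp_struct:
  "\<exists>R. L = query_prefix n L @ R \<and> (R \<noteq> [] \<longrightarrow> audit_cost (query_prefix n L) = n + 1)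
     \<and> audit_cost (query_prefix n L) \<le> n + 1"
proof (induction L arbitrary: n)
  case Nil thus ?case by (simp add: audit_cost_def)
next
  case (Cons p ps)
  show ?case
  proof (cases "snd p = -1")
    case True
    show ?thesis
    proof (cases n)
      case 0 thus ?thesis using True by (simp add: audit_cost_def)
    next
      case (Suc n')
      from Cons.IH[of n'] obtain R where "ps = query_prefix n' ps @ R"
        "R \<noteq> [] \<longrightarrow> audit_cost (query_prefix n' ps) = n' + 1"
        "audit_cost (query_prefix n' ps) \<le> n' + 1" by blast
      thus ?thesis using True Suc by (auto simp: audit_cost_def)
    qed
  next
    case False
    from Cons.IH[of n] obtain R where "ps = query_prefix n ps @ R"
      "R \<noteq> [] \<longrightarrow> audit_cost (query_prefix n ps) = n + 1"
      "audit_cost (query_prefix n ps) \<le> n + 1" by blast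
    thus ?thesis using False by (auto simp: audit_cost_def)
  qed
qed

lemma len_filter_mono: "(\<And>x. x \<in> set xs \<Longrightarrow> P x \<Longrightarrow> Q x) \<Longrightarrow> length (filter P xs) \<le> length (filter Q xs)"
  by (induction xs) auto

lemma cnt_append: "cnt (A @ B) a = cnt A a + cnt B a"
  by (simp add: cnt_def)

lemma cnt_mset: "mset A = mset B \<Longrightarrow> cnt A a = cnt B a"
  unfolding cnt_def by (metis mset_filter size_mset)

theorem lemma3:
  fixes S :: "lpoint list" and k :: nat and order :: "lpoint list"
  assumes pts: "\<forall>p \<in> set S. 0 \<le> fst p \<and> fst p \<le> 1 \<and> snd p \<in> {-1, 1}"
    and m_def: "m = length S"
    and hyp: "err_H S \<le> real k / real m"
    and perm: "mset order = mset S"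
    and desc: "sorted_wrt (\<lambda>p q. fst p \<ge> fst q) order"
    and Q_def: "Q = query_prefix k order"
  shows "(\<exists>a \<in> {0..1}. err Q a = err_H Q)
       \<and> (\<forall>a \<in> {0..1}. err Q a = err_H Q \<longrightarrow> err S a = err_H S)
       \<and> audit_cost Q \<le> k + 1"
proof -
  obtain R where R: "order = Q @ R" "R \<noteq> [] \<longrightarrow> audit_cost Q = k + 1"
    "audit_cost Q \<le> k + 1"
    using qp_struct[of order k] Q_def by blast
  have ex: "\<exists>a \<in> {0..1}. err Q a = err_H Q"
    using min_exists[of Q] errH_eq by metis
  have cS: "cnt S a = cnt Q a + cnt R a" for a
    using cnt_mset[OF perm] R(1) cnt_append by metis
  define c where "c = length (filter (\<lambda>q. snd q \<noteq> -1) R)"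
  have dich: "(k + 1 \<le> cnt Q a \<and> k + 1 \<le> cnt S a) \<or> cnt S a = cnt Q a + c" for a
  proof (cases "R = []")
    case True thus ?thesis using cS c_def by (simp add: cnt_def)
  next
    case False
    hence ac: "audit_cost Q = k + 1" using R(2) by blast
    show ?thesis
    proof (cases "\<forall>p\<in>set Q. snd p = -1 \<longrightarrow> a \<le> fst p")
      case True
      have "audit_cost Q \<le> cnt Q a" unfolding audit_cost_def cnt_def
      proof (rule len_filter_mono)
        fix q assume q: "q \<in> set Q" "snd q = -1"
        hence "a \<le> fst q" using True by blast
        thus "(\<lambda>(x, y). thr a x \<noteq> y) q" using q(2) by (cases q) (simp add: thr_def)
      qed
      thus ?thesis using ac cS[of a] by linarith
    next
      case False
      then obtain p where p: "p \<in> set Q" "fst p < a" by force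
      have "\<forall>q\<in>set R. fst q \<le> fst p" using desc R(1) p(1)
        by (auto simp: sorted_wrt_append)
      hence "\<forall>q\<in>set R. fst q < a" using p(2) by force
      hence "cnt R a = c" unfolding cnt_def c_def
        by (intro arg_cong[where f=length] filter_cong) (auto simp: thr_def)
      thus ?thesis using cS by simp
    qed
  qed
  have opt: "err S a = err_H S" if a: "a \<in> {0..1}" and ea: "err Q a = err_H Q" for a
  proof (cases "S = []")
    case True thus ?thesis by (simp add: err_def err_H_def)
  next
    case False
    hence "order \<noteq> []" using perm by (metis mset_zero_iff)
    hence Qne: "Q \<noteq> []" unfolding Q_def by (cases order) auto
    obtain a0 where a0: "a0 \<in> {0..1}" "\<forall>a\<in>{0..1}. cnt S a0 \<le> cnt S a"
      using min_exists by blast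
    have H: "err_H S = err S a0" using errH_eq a0 by blast
    have mpos: "real m > 0" using False m_def by simp
    have "real (cnt S a0) / real m \<le> real k / real m" using hyp H m_def by (simp add: err_cnt)
    hence k0: "cnt S a0 \<le> k" using mpos by (simp add: divide_le_cancel)
    have qa: "\<forall>a'\<in>{0..1}. cnt Q a \<le> cnt Q a'" using opt_iff[OF Qne a] ea by blast
    have a0d: "cnt S a0 = cnt Q a0 + c" using dich[of a0] k0 by linarith
    have qaa0: "cnt Q a \<le> k" using qa[rule_format, OF a0(1)] a0d k0 by linarith
    have ad: "cnt S a = cnt Q a + c" using dich[of a] qaa0 by linarith
    have "\<forall>a'\<in>{0..1}. cnt S a \<le> cnt S a'"
    proof
      fix a' :: real assume a': "a' \<in> {0..1}"
      show "cnt S a \<le> cnt S a'"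
        using dich[of a'] qa[rule_format, OF a'] ad a0d k0 qa[rule_format, OF a0(1)] by linarith
    qed
    thus ?thesis using opt_iff[OF False a] by blast
  qed
  show ?thesis using ex opt R(3) by blast
qed

end
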